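(* Fix $x\in\mathbb X$ and $\Lambda\Subset\mathbb X\setminus\{x\}$, a total order $\preceq$ on $\mathbf F(x)$, a set $\mathbf E\subset\mathbf F(x)$ with $\mathbf E\supset\{X\in\mathbf F(x)\mid W(X)\neq1,\ X\setminus\{x\}\subset\Lambda\}$, and for each $X\in\mathbf F(x)$ a total order (also denoted $\preceq$) on $X'$, with $X'_{\prec x'}=\{x''\in X'\mid x''\prec x'\}$ for $x'\in X'$. Suppose that $Z(\Lambda)\neq0$ and, unless $z(x)W(x)=0$, assume also that \[ Z_X(\Lambda\setminus\{x'\}\mid X'_{\prec x'})\neq0\quad\text{and}\quad \widehat z_X(x',\Lambda\setminus\{x'\}\mid X'_{\prec x'})\neq-1 \] for all $X\in\mathbf E$ and $x'\in X'$. Then \[ \widehat z(x,\Lambda)=z(x)\prod_{X\in\mathbf F(x):\,X'\subset\Lambda}\left(1+(W(X)-1)\prod_{x'\in X'}\frac{\widehat z_X(x',\Lambda\setminus\{x'\}\mid X'_{\prec x'})}{1+\widehat z_X(x',\Lambda\setminus\{x'\}\mid X'_{\prec x'})}\right). \]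
   Context: $\mathbb X$ is a finite or countably infinite set, $X\Subset\mathbb X$ means finite subset, $\mathbf F$ is the set of finite subsets of $\mathbb X$. Fix $z:\mathbb X\to\mathbb C$, $W:\mathbf F\to\mathbb C$; $f^X=\prod_{y\in X}f(y)$, $W(x)=W(\{x\})$; singletons $\{x\}$ are written $x$ inside arguments. For an interaction $V:\mathbf F\to\mathbb C$, the conditional interaction is $V(X\mid B)=\prod_{C\subset B}V(X\cup C)$ if $X\cap B=\varnothing$, $V(X\mid B)=0$ if $X=\{y\}$ with $y\in B$, and $V(X\mid B)=1$ otherwise; the Boltzmann factor is $\kappa(X\mid B)=\prod_{\varnothing\neq S\subset X}V(S\mid B)$; partition functions are $Z(X,\Lambda\mid B)=\sum_{Y\subset\Lambda\setminus X}z^{X\cup Y}\kappa(X\cup Y\mid B)$, $Z(\Lambda\mid B)=Z(\varnothing,\Lambda\mid B)$, with $B$ omitted when $B=\varnothing$; correlations $R(X,\Lambda\mid B)=Z(X,\Lambda\mid B)/Z(\Lambda\mid B)$ when the denominator is nonzero, and effective activities $\widehat z(y,\Lambda\mid B)=R(\{y\},\Lambda\mid B)$ for $y\notin\Lambda$. Unadorned $\kappa,Z,R,\widehat z$ refer to $V=W$. Let $\mathbf F(x)=\{X\Subset\mathbb X\mid x\in X\}$ and $X'=X\setminus\{x\}$. Given the total order $\preceq$ on $\mathbf F(x)$ (strict part $\prec$) and $X\in\mathbf F(x)$, define $W_X:\mathbf F\to\mathbb C$ by $W_X(Y)=W(Y)W(\{x\}\cup Y)$ if $x\notin Y$ and $\{x\}\cup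 Y\prec X$; $W_X(Y)=1$ if $x\in Y$ and $Y\neq X$; $W_X(Y)=W(Y)$ otherwise. Quantities built from $V=W_X$ are written $\kappa_X,Z_X,R_X,\widehat z_X$. Convention: a product is set equal to $0$ if at least one factor is well defined and equals $0$, even if other factors are ill-defined. *)

theory Defs
  imports Complex_Main "HOL-Library.Countable"
begin

definition Fx :: "'a \<Rightarrow> 'a set set" where
  "Fx x = {X. finite X \<and> x \<in> X}"

definition cond_int :: "('a set \<Rightarrow> complex) \<Rightarrow> 'a set \<Rightarrow> 'a set \<Rightarrow> complex" where
  "cond_int V X B =
     (if X \<inter> B = {} then (\<Prod>C\<in>Pow B. V (X \<union> C))
      else if (\<exists>y\<in>B. X = {y}) then 0 else 1)"

definition boltz :: "('a set \<Rightarrow> complex) \<Rightarrow> 'a set \<Rightarrow> 'a set \<Rightarrow> complex" where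
  "boltz V X B = (\<Prod>S\<in>Pow X - {{}}. cond_int V S B)"

definition pfX :: "('a set \<Rightarrow> complex) \<Rightarrow> ('a \<Rightarrow> complex) \<Rightarrow> 'a set \<Rightarrow> 'a set \<Rightarrow> 'a set \<Rightarrow> complex" where
  "pfX V z X \<Lambda> B = (\<Sum>Y\<in>Pow (\<Lambda> - X). prod z (X \<union> Y) * boltz V (X \<union> Y) B)"

definition pf :: "('a set \<Rightarrow> complex) \<Rightarrow> ('a \<Rightarrow> complex) \<Rightarrow> 'a set \<Rightarrow> 'a set \<Rightarrow> complex" where
  "pf V z \<Lambda> B = pfX V z {} \<Lambda> B"

text \<open>Correlation R(X, Lambda | B) (HOL division: value 0 if denominator is 0).\<close>
definition corr :: "('a set \<Rightarrow> complex) \<Rightarrow> ('a \<Rightarrow> complex) \<Rightarrow> 'a set \<Rightarrow> 'a set \<Rightarrow> 'a set \<Rightarrow> complex" where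
  "corr V z X \<Lambda> B = pfX V z X \<Lambda> B / pf V z \<Lambda> B"

definition eff :: "('a set \<Rightarrow> complex) \<Rightarrow> ('a \<Rightarrow> complex) \<Rightarrow> 'a \<Rightarrow> 'a set \<Rightarrow> 'a set \<Rightarrow> complex" where
  "eff V z y \<Lambda> B = corr V z {y} \<Lambda> B"

definition WX :: "('a set \<Rightarrow> complex) \<Rightarrow> 'a set rel \<Rightarrow> 'a \<Rightarrow> 'a set \<Rightarrow> 'a set \<Rightarrow> complex" where
  "WX W r x X Y =
     (if x \<notin> Y \<and> (insert x Y, X) \<in> r \<and> insert x Y \<noteq> X then W Y * W (insert x Y)
      else if x \<in> Y \<and> Y \<noteq> X then 1
      else W Y)"

definition below :: "'a rel \<Rightarrow> 'a set \<Rightarrow> 'a \<Rightarrow> 'a set" where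
  "below s A a = {b \<in> A. (b, a) \<in> s \<and> b \<noteq> a}"

end

theory Submission
  imports Defs
begin

lemma cond_int_empty[simp]: "cond_int V S {} = V S" by (simp add: cond_int_def)

lemma boltz_empty: "boltz V Y {} = (\<Prod>S\<in>Pow Y - {{}}. V S)" by (simp add: boltz_def)

lemma boltz_zero: assumes "finite Y" "y \<in> Y" "y \<in> B" shows "boltz V Y B = 0"
  unfolding boltz_def
proof (rule prod_zero)
  show "finite (Pow Y - {{}})" using assms by simp
  have "cond_int V {y} B = 0" using assms by (auto simp: cond_int_def)
  then show "\<exists>a\<in>Pow Y - {{}}. cond_int V a B = 0" using assms by blast
qed

lemma boltz_mult:
  assumes fB: "finite B" and fT: "finite T" and dis: "T \<inter> B = {}"
  shows "boltz V B {} * boltz V T B = boltz V (B \<union> T) {}"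
proof -
  have "boltz V T B = (\<Prod>S\<in>Pow T - {{}}. \<Prod>C\<in>Pow B. V (S \<union> C))"
    unfolding boltz_def
    by (rule prod.cong) (use dis in \<open>auto simp: cond_int_def\<close>)
  also have "\<dots> = (\<Prod>p\<in>(Pow T - {{}}) \<times> Pow B. V (fst p \<union> snd p))"
    by (simp add: prod.cartesian_product case_prod_beta)
  also have "\<dots> = (\<Prod>U\<in>(\<lambda>p. fst p \<union> snd p) ` ((Pow T - {{}}) \<times> Pow B). V U)"
  proof (rule prod.reindex[symmetric, unfolded comp_def])
    show "inj_on (\<lambda>p. fst p \<union> snd p) ((Pow T - {{}}) \<times> Pow B)"
    proof (rule inj_onI)
      fix p q assume p: "p \<in> (Pow T - {{}}) \<times> Pow B" and q: "q \<in> (Pow T - {{}}) \<times> Pow B"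
        and e: "fst p \<union> snd p = fst q \<union> snd q"
      have "fst p = (fst p \<union> snd p) \<inter> T" "snd p = (fst p \<union> snd p) \<inter> B"
        using p dis by auto
      moreover have "fst q = (fst q \<union> snd q) \<inter> T" "snd q = (fst q \<union> snd q) \<inter> B"
        using q dis by auto
      ultimately show "p = q" using e by (metis prod.expand)
    qed
  qed
  also have "(\<lambda>p. fst p \<union> snd p) ` ((Pow T - {{}}) \<times> Pow B) = {U \<in> Pow (B \<union> T). U \<inter> T \<noteq> {}}"
  proof (rule set_eqI, rule iffI)
    fix U assume "U \<in> (\<lambda>p. fst p \<union> snd p) ` ((Pow T - {{}}) \<times> Pow B)"
    then show "U \<in> {U \<in> Pow (B \<union> T). U \<inter> T \<noteq> {}}" by auto
  next
    fix U assume U: "U \<in> {U \<in> Pow (B \<union> T). U \<inter> T \<noteq> {}}"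
    then have "U = fst (U \<inter> T, U \<inter> B) \<union> snd (U \<inter> T, U \<inter> B)" by auto
    moreover have "(U \<inter> T, U \<inter> B) \<in> (Pow T - {{}}) \<times> Pow B" using U by auto
    ultimately show "U \<in> (\<lambda>p. fst p \<union> snd p) ` ((Pow T - {{}}) \<times> Pow B)" by blast
  qed
  finally have 1: "boltz V T B = (\<Prod>U\<in>{U \<in> Pow (B \<union> T). U \<inter> T \<noteq> {}}. V U)" .
  have 2: "Pow (B \<union> T) - {{}} = (Pow B - {{}}) \<union> {U \<in> Pow (B \<union> T). U \<inter> T \<noteq> {}}"
    by auto
  have 3: "(Pow B - {{}}) \<inter> {U \<in> Pow (B \<union> T). U \<inter> T \<noteq> {}} = {}" using dis by auto
  show ?thesis unfolding 1 boltz_empty 2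
    by (rule prod.union_disjoint[symmetric]) (use fB fT 3 in auto)
qed

lemma key:
  assumes "finite \<Lambda>" "finite B" "finite C" "B \<subseteq> \<Lambda>" "B \<inter> C = {}"
  shows "prod z B * boltz V B {} * pfX V z C \<Lambda> B = pfX V z (B \<union> C) \<Lambda> {}"
proof -
  have "pfX V z C \<Lambda> B = (\<Sum>Y\<in>Pow (\<Lambda> - (B \<union> C)). prod z (C \<union> Y) * boltz V (C \<union> Y) B)"
    unfolding pfX_def
  proof (rule sum.mono_neutral_right)
    show "finite (Pow (\<Lambda> - C))" using assms by simp
    show "Pow (\<Lambda> - (B \<union> C)) \<subseteq> Pow (\<Lambda> - C)" by auto
    show "\<forall>i\<in>Pow (\<Lambda> - C) - Pow (\<Lambda> - (B \<union> C)). prod z (C \<union> i) * boltz V (C \<union> i) B = 0"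
    proof
      fix Y assume Y: "Y \<in> Pow (\<Lambda> - C) - Pow (\<Lambda> - (B \<union> C))"
      then obtain y where "y \<in> Y" "y \<in> B" by auto
      moreover have "finite (C \<union> Y)" using Y assms by (auto intro: finite_subset)
      ultimately have "boltz V (C \<union> Y) B = 0" by (intro boltz_zero) auto
      then show "prod z (C \<union> Y) * boltz V (C \<union> Y) B = 0" by simp
    qed
  qed
  then have "prod z B * boltz V B {} * pfX V z C \<Lambda> B =
     (\<Sum>Y\<in>Pow (\<Lambda> - (B \<union> C)). prod z B * boltz V B {} * (prod z (C \<union> Y) * boltz V (C \<union> Y) B))"
    by (simp add: sum_distrib_left)
  also have "\<dots> = (\<Sum>Y\<in>Pow (\<Lambda> - (B \<union> C)). prod z (B \<union> C \<union> Y) * boltz V (B \<union> C \<union> Y) {})"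
  proof (rule sum.cong[OF refl])
    fix Y assume Y: "Y \<in> Pow (\<Lambda> - (B \<union> C))"
    have fY: "finite Y" using Y assms by (auto intro: finite_subset)
    have d: "B \<inter> (C \<union> Y) = {}" using Y assms by auto
    have "prod z (B \<union> (C \<union> Y)) = prod z B * prod z (C \<union> Y)"
      by (rule prod.union_disjoint) (use assms fY d in auto)
    moreover have "boltz V B {} * boltz V (C \<union> Y) B = boltz V (B \<union> (C \<union> Y)) {}"
      by (rule boltz_mult) (use assms fY d in auto)
    ultimately show "prod z B * boltz V B {} * (prod z (C \<union> Y) * boltz V (C \<union> Y) B) =
        prod z (B \<union> C \<union> Y) * boltz V (B \<union> C \<union> Y) {}"
      by (simp add: Un_assoc mult_ac)
  qed
  also have "\<dots> = pfX V z (B \<union> C) \<Lambda> {}" by (simp add: pfX_def)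
  finally show ?thesis .
qed

lemma split:
  assumes "finite \<Lambda>" "a \<in> \<Lambda>"
  shows "pf V z \<Lambda> B = pf V z (\<Lambda> - {a}) B + pfX V z {a} \<Lambda> B"
proof -
  have L: "\<Lambda> = insert a (\<Lambda> - {a})" using assms by auto
  have "pf V z \<Lambda> B = (\<Sum>Y\<in>Pow \<Lambda>. prod z Y * boltz V Y B)" by (simp add: pf_def pfX_def)
  also have "Pow \<Lambda> = Pow (\<Lambda> - {a}) \<union> insert a ` Pow (\<Lambda> - {a})"
    by (subst L, rule Pow_insert)
  also have "(\<Sum>Y\<in>Pow (\<Lambda> - {a}) \<union> insert a ` Pow (\<Lambda> - {a}). prod z Y * boltz V Y B) =
     (\<Sum>Y\<in>Pow (\<Lambda> - {a}). prod z Y * boltz V Y B) + (\<Sum>Y\<in>insert a ` Pow (\<Lambda> - {a}). prod z Y * boltz V Y B)"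
    by (rule sum.union_disjoint) (use assms in auto)
  also have "(\<Sum>Y\<in>insert a ` Pow (\<Lambda> - {a}). prod z Y * boltz V Y B) =
      (\<Sum>Y\<in>Pow (\<Lambda> - {a}). prod z (insert a Y) * boltz V (insert a Y) B)"
  proof (rule sum.reindex[unfolded comp_def])
    show "inj_on (insert a) (Pow (\<Lambda> - {a}))"
      by (rule inj_onI) (metis Diff_insert_absorb PowD in_mono Diff_iff singletonI)
  qed
  finally show ?thesis by (simp add: pf_def pfX_def)
qed

lemma ratio:
  assumes "finite \<Lambda>" "a \<in> \<Lambda>" "pf V z (\<Lambda> - {a}) B \<noteq> 0" "eff V z a (\<Lambda> - {a}) B \<noteq> -1"
  shows "pf V z \<Lambda> B \<noteq> 0 \<and>
    eff V z a (\<Lambda> - {a}) B / (1 + eff V z a (\<Lambda> - {a}) B) = pfX V z {a} \<Lambda> B / pf V z \<Lambda> B"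
proof -
  define N where "N = pfX V z {a} \<Lambda> B"
  define D where "D = pf V z (\<Lambda> - {a}) B"
  have N: "pfX V z {a} (\<Lambda> - {a}) B = N" unfolding N_def pfX_def
    by (metis Diff_idemp)
  have e: "eff V z a (\<Lambda> - {a}) B = N / D" by (simp add: eff_def corr_def N D_def)
  have s: "pf V z \<Lambda> B = D + N" using split[OF assms(1,2)] by (simp add: D_def N_def)
  have D0: "D \<noteq> 0" using assms D_def by simp
  have "N / D \<noteq> -1" using assms e by simp
  then have DN: "D + N \<noteq> 0" using D0 by (auto simp: field_simps)
    (metis add.commute add_eq_0_iff divide_self_if divide_minus_left ) 
  have "(N / D) / (1 + N / D) = N / (D + N)" using D0 DN by (simp add: field_simps)
  then show ?thesis using s e DN by (simp add: N_def)
qed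


lemma lin_max:
  assumes "finite S" "S \<noteq> {}" "S \<subseteq> A" "linear_order_on A s"
  shows "\<exists>m\<in>S. \<forall>b\<in>S. (b, m) \<in> s"
  using assms(1,2,3)
proof (induction S rule: finite_ne_induct)
  case (singleton a)
  then show ?case using assms(4)
    by (auto simp: linear_order_on_def partial_order_on_def preorder_on_def refl_on_def)
next
  case (insert a F)
  then obtain m where m: "m \<in> F" "\<forall>b\<in>F. (b, m) \<in> s" by auto
  have tr: "trans s" and tot: "total_on A s" and rf: "refl_on A s"
    using assms(4) by (auto simp: linear_order_on_def partial_order_on_def preorder_on_def)
  have aA: "a \<in> A" "m \<in> A" using insert m by auto
  show ?case
  proof (cases "(a, m) \<in> s")
    case True
    then show ?thesis using m by auto
  next
    case False
    then have "a \<noteq> m" using rf aA by (auto simp: refl_on_def)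
    then have am: "(m, a) \<in> s" using False tot aA by (auto simp: total_on_def)
    have "\<forall>b\<in>insert a F. (b, a) \<in> s"
      using m am tr rf aA by (auto simp: refl_on_def dest: transD)
    then show ?thesis by auto
  qed
qed

lemma corr_prod:
  assumes fL: "finite \<Lambda>" and AL: "A \<subseteq> \<Lambda>" and lin: "linear_order_on A s"
    and h: "\<forall>a\<in>A. pf V z (\<Lambda> - {a}) (below s A a) \<noteq> 0 \<and> eff V z a (\<Lambda> - {a}) (below s A a) \<noteq> -1"
  shows "pfX V z A \<Lambda> {} = pf V z \<Lambda> {} *
     (\<Prod>a\<in>A. eff V z a (\<Lambda> - {a}) (below s A a) / (1 + eff V z a (\<Lambda> - {a}) (below s A a)))"
proof -
  have fA: "finite A" using fL AL by (rule finite_subset[rotated])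
  have antis: "antisym s" using lin by (auto simp: linear_order_on_def partial_order_on_def)
  have "\<forall>D. D \<subseteq> A \<longrightarrow> (\<forall>c\<in>D. \<forall>b\<in>A. (b, c) \<in> s \<longrightarrow> b \<in> D) \<longrightarrow>
     pfX V z D \<Lambda> {} = pf V z \<Lambda> {} *
     (\<Prod>a\<in>D. eff V z a (\<Lambda> - {a}) (below s A a) / (1 + eff V z a (\<Lambda> - {a}) (below s A a)))"
  proof (intro allI impI)
    fix D assume DA: "D \<subseteq> A" and Dc: "\<forall>c\<in>D. \<forall>b\<in>A. (b, c) \<in> s \<longrightarrow> b \<in> D"
    have fD: "finite D" using fA DA by (rule finite_subset[rotated])
    from fD DA Dc show "pfX V z D \<Lambda> {} = pf V z \<Lambda> {} *
     (\<Prod>a\<in>D. eff V z a (\<Lambda> - {a}) (below s A a) / (1 + eff V z a (\<Lambda> - {a}) (below s A a)))"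
    proof (induction D rule: finite_psubset_induct)
      case (psubset D)
      show ?case
      proof (cases "D = {}")
        case True
        then show ?thesis by (simp add: pf_def)
      next
        case False
        obtain m where m: "m \<in> D" "\<forall>b\<in>D. (b, m) \<in> s"
          using lin_max[OF psubset.hyps(1) False psubset.prems(1) lin] by auto
        define B where "B = D - {m}"
        have Bb: "B = below s A m"
          using m psubset.prems unfolding B_def below_def by blast
        have BD: "B \<subset> D" using m B_def by auto
        have Bc: "\<forall>c\<in>B. \<forall>b\<in>A. (b, c) \<in> s \<longrightarrow> b \<in> B"
        proof (intro ballI impI)
          fix c b assume c: "c \<in> B" and b: "b \<in> A" and bc: "(b, c) \<in> s"
          have "b \<in> D" using psubset.prems c b bc B_def by auto
          moreover have "b \<noteq> m"
          proof
            assume "b = m"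
            then have "(m, c) \<in> s" "(c, m) \<in> s" using bc m c B_def by auto
            then have "c = m" using antis by (auto dest: antisymD)
            then show False using c B_def by auto
          qed
          ultimately show "b \<in> B" using B_def by auto
        qed
        have IH: "pfX V z B \<Lambda> {} = pf V z \<Lambda> {} *
          (\<Prod>a\<in>B. eff V z a (\<Lambda> - {a}) (below s A a) / (1 + eff V z a (\<Lambda> - {a}) (below s A a)))"
          using psubset.IH[OF BD _ Bc] BD psubset.prems(1) by blast
        have mA: "m \<in> A" "m \<in> \<Lambda>" using m psubset.prems AL by auto
        have fB: "finite B" using BD psubset.hyps by (auto intro: finite_subset)
        have BL: "B \<subseteq> \<Lambda>" using BD psubset.prems AL by auto
        have rt: "pf V z \<Lambda> B \<noteq> 0 \<and>
          eff V z m (\<Lambda> - {m}) B / (1 + eff V z m (\<Lambda> - {m}) B) = pfX V z {m} \<Lambda> B / pf V z \<Lambda> B"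
          using ratio[OF fL mA(2)] h mA(1) Bb by auto
        have k1: "prod z B * boltz V B {} * pfX V z {m} \<Lambda> B = pfX V z (B \<union> {m}) \<Lambda> {}"
          by (rule key) (use fL fB BL B_def in auto)
        have k2: "prod z B * boltz V B {} * pfX V z {} \<Lambda> B = pfX V z (B \<union> {}) \<Lambda> {}"
          by (rule key) (use fL fB BL B_def in auto)
        have Dm: "D = B \<union> {m}" using m B_def by auto
        let ?r = "\<lambda>a. eff V z a (\<Lambda> - {a}) (below s A a) / (1 + eff V z a (\<Lambda> - {a}) (below s A a))"
        have pr: "(\<Prod>a\<in>D. ?r a) = ?r m * (\<Prod>a\<in>B. ?r a)"
          using psubset.hyps m B_def by (simp add: prod.remove)
        have "pfX V z D \<Lambda> {} = prod z B * boltz V B {} * pfX V z {m} \<Lambda> B"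
          using k1 Dm by simp
        also have "pfX V z {m} \<Lambda> B = ?r m * pf V z \<Lambda> B"
          using rt Bb by (simp add: field_simps)
        also have "prod z B * boltz V B {} * (?r m * pf V z \<Lambda> B) = ?r m * pfX V z B \<Lambda> {}"
          using k2 by (simp add: pf_def mult_ac)
        also have "\<dots> = pf V z \<Lambda> {} * (\<Prod>a\<in>D. ?r a)"
          using IH pr by (simp add: mult_ac)
        finally show ?thesis .
      qed
    qed
  qed
  then show ?thesis by blast
qed


lemma reidx:
  assumes fL: "finite \<Lambda>" and xL: "x \<notin> \<Lambda>" and YL: "Y \<subseteq> \<Lambda>"
  shows "(\<Prod>S\<in>{S \<in> Pow Y - {{}}. c (insert x S)}. f (insert x S)) =
         (\<Prod>X\<in>{X \<in> {X \<in> Fx x. X - {x} \<subseteq> \<Lambda> \<and> X \<noteq> {x}}. c X \<and> X - {x} \<subseteq> Y}. f X)"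
proof -
  have inj: "inj_on (insert x) {S \<in> Pow Y - {{}}. c (insert x S)}"
  proof (rule inj_onI)
    fix S T assume "S \<in> {S \<in> Pow Y - {{}}. c (insert x S)}" "T \<in> {S \<in> Pow Y - {{}}. c (insert x S)}"
      "insert x S = insert x T"
    then show "S = T" using xL YL by (metis Diff_insert_absorb PowD in_mono mem_Collect_eq Diff_iff)
  qed
  have im: "insert x ` {S \<in> Pow Y - {{}}. c (insert x S)} =
     {X \<in> {X \<in> Fx x. X - {x} \<subseteq> \<Lambda> \<and> X \<noteq> {x}}. c X \<and> X - {x} \<subseteq> Y}"
  proof (rule set_eqI, rule iffI)
    fix X assume "X \<in> insert x ` {S \<in> Pow Y - {{}}. c (insert x S)}"
    then obtain S where S: "S \<subseteq> Y" "S \<noteq> {}" "c (insert x S)" "X = insert x S" by auto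
    have "finite S" using finite_subset[OF subset_trans[OF S(1) YL] fL] .
    moreover have "x \<notin> S" using S xL YL by auto
    ultimately show "X \<in> {X \<in> {X \<in> Fx x. X - {x} \<subseteq> \<Lambda> \<and> X \<noteq> {x}}. c X \<and> X - {x} \<subseteq> Y}"
      using S YL by (auto simp: Fx_def)
  next
    fix X assume X: "X \<in> {X \<in> {X \<in> Fx x. X - {x} \<subseteq> \<Lambda> \<and> X \<noteq> {x}}. c X \<and> X - {x} \<subseteq> Y}"
    then have "X = insert x (X - {x})" "X - {x} \<noteq> {}" by (auto simp: Fx_def)
    then show "X \<in> insert x ` {S \<in> Pow Y - {{}}. c (insert x S)}"
      using X by (metis (mono_tags, lifting) DiffI Diff_empty PowI image_eqI mem_Collect_eq singletonD)
  qed
  show ?thesis using prod.reindex[OF inj, of f] im by (simp add: comp_def)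
qed

lemma sum_sup:
  assumes "finite \<Lambda>" "A \<subseteq> \<Lambda>"
  shows "(\<Sum>Y\<in>Pow (\<Lambda> - A). f (A \<union> Y)) = (\<Sum>Y\<in>{Y \<in> Pow \<Lambda>. A \<subseteq> Y}. f Y)"
proof -
  have inj: "inj_on (\<lambda>Y. A \<union> Y) (Pow (\<Lambda> - A))"
    by (rule inj_onI) auto
  have im: "(\<lambda>Y. A \<union> Y) ` Pow (\<Lambda> - A) = {Y \<in> Pow \<Lambda>. A \<subseteq> Y}"
  proof (rule set_eqI, rule iffI)
    fix Y assume "Y \<in> {Y \<in> Pow \<Lambda>. A \<subseteq> Y}"
    then have "Y = A \<union> (Y - A)" "Y - A \<in> Pow (\<Lambda> - A)" by auto
    then show "Y \<in> (\<lambda>Y. A \<union> Y) ` Pow (\<Lambda> - A)" by blast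
  qed (use assms in auto)
  show ?thesis using sum.reindex[OF inj, of f] im by (simp add: comp_def)
qed

lemma boltz_WX:
  assumes fL: "finite \<Lambda>" and xL: "x \<notin> \<Lambda>" and YL: "Y \<subseteq> \<Lambda>"
  shows "boltz (WX W r x M) Y {} = boltz W Y {} *
    prod W {X \<in> {X \<in> {X \<in> Fx x. X - {x} \<subseteq> \<Lambda> \<and> X \<noteq> {x}}. (X, M) \<in> r \<and> X \<noteq> M}. X - {x} \<subseteq> Y}"
proof -
  have fY: "finite Y" using fL YL by (rule finite_subset[rotated])
  let ?c = "\<lambda>X. (X, M) \<in> r \<and> X \<noteq> M"
  have "boltz (WX W r x M) Y {} = (\<Prod>S\<in>Pow Y - {{}}. W S * (if ?c (insert x S) then W (insert x S) else 1))"
    unfolding boltz_empty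
    by (rule prod.cong[OF refl]) (use xL YL in \<open>auto simp: WX_def\<close>)
  also have "\<dots> = boltz W Y {} * (\<Prod>S\<in>Pow Y - {{}}. if ?c (insert x S) then W (insert x S) else 1)"
    by (simp add: prod.distrib boltz_empty)
  also have "(\<Prod>S\<in>Pow Y - {{}}. if ?c (insert x S) then W (insert x S) else 1) =
      (\<Prod>S\<in>{S \<in> Pow Y - {{}}. ?c (insert x S)}. W (insert x S))"
    by (rule prod.inter_filter[symmetric]) (use fY in simp)
  also have "\<dots> = (\<Prod>X\<in>{X \<in> {X \<in> Fx x. X - {x} \<subseteq> \<Lambda> \<and> X \<noteq> {x}}. ?c X \<and> X - {x} \<subseteq> Y}. W X)"
    by (rule reidx[OF fL xL YL])
  also have "{X \<in> {X \<in> Fx x. X - {x} \<subseteq> \<Lambda> \<and> X \<noteq> {x}}. ?c X \<and> X - {x} \<subseteq> Y} =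
     {X \<in> {X \<in> {X \<in> Fx x. X - {x} \<subseteq> \<Lambda> \<and> X \<noteq> {x}}. (X, M) \<in> r \<and> X \<noteq> M}. X - {x} \<subseteq> Y}" by blast
  finally show ?thesis .
qed

lemma boltz_ins:
  assumes fL: "finite \<Lambda>" and xL: "x \<notin> \<Lambda>" and YL: "Y \<subseteq> \<Lambda>"
  shows "boltz W (insert x Y) {} = W {x} * boltz W Y {} *
    prod W {X \<in> {X \<in> Fx x. X - {x} \<subseteq> \<Lambda> \<and> X \<noteq> {x}}. X - {x} \<subseteq> Y}"
proof -
  have fY: "finite Y" using fL YL by (rule finite_subset[rotated])
  have xY: "x \<notin> Y" using xL YL by auto
  have 1: "Pow (insert x Y) - {{}} = (Pow Y - {{}}) \<union> insert x ` Pow Y" by (auto simp: Pow_insert)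
  have inj: "inj_on (insert x) (Pow Y)"
    by (rule inj_onI) (metis Diff_insert_absorb PowD in_mono xY)
  have "boltz W (insert x Y) {} = boltz W Y {} * (\<Prod>S\<in>insert x ` Pow Y. W S)"
    unfolding boltz_empty 1
    by (rule prod.union_disjoint) (use fY xY in auto)
  also have "(\<Prod>S\<in>insert x ` Pow Y. W S) = (\<Prod>S\<in>Pow Y. W (insert x S))"
    using prod.reindex[OF inj, of W] by (simp add: comp_def)
  also have "\<dots> = W (insert x {}) * (\<Prod>S\<in>Pow Y - {{}}. W (insert x S))"
    by (subst prod.remove[of "Pow Y" "{}"]) (use fY in auto)
  also have "(\<Prod>S\<in>Pow Y - {{}}. W (insert x S)) = (\<Prod>S\<in>{S \<in> Pow Y - {{}}. True}. W (insert x S))"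
    by (rule prod.cong) auto
  also have "\<dots> = (\<Prod>X\<in>{X \<in> {X \<in> Fx x. X - {x} \<subseteq> \<Lambda> \<and> X \<noteq> {x}}. True \<and> X - {x} \<subseteq> Y}. W X)"
    by (rule reidx[OF fL xL YL])
  finally show ?thesis by (simp add: mult_ac)
qed


theorem proposition4p5:
  fixes z :: "'a::countable \<Rightarrow> complex" and W :: "'a set \<Rightarrow> complex"
    and x :: 'a and \<Lambda> :: "'a set" and r :: "'a set rel"
    and E :: "'a set set" and ord :: "'a set \<Rightarrow> 'a rel"
  assumes "finite \<Lambda>" and "x \<notin> \<Lambda>"
    and "linear_order_on (Fx x) r"
    and "E \<subseteq> Fx x"
    and "{X \<in> Fx x. W X \<noteq> 1 \<and> X - {x} \<subseteq> \<Lambda>} \<subseteq> E"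
    and "\<forall>X\<in>Fx x. linear_order_on (X - {x}) (ord X)"
    and "pf W z \<Lambda> {} \<noteq> 0"
    and "z x * W {x} \<noteq> 0 \<Longrightarrow>
           (\<forall>X\<in>E. \<forall>x'\<in>X - {x}.
              pf (WX W r x X) z (\<Lambda> - {x'}) (below (ord X) (X - {x}) x') \<noteq> 0 \<and>
              eff (WX W r x X) z x' (\<Lambda> - {x'}) (below (ord X) (X - {x}) x') \<noteq> -1)"
  shows "eff W z x \<Lambda> {} =
           z x * (\<Prod>X\<in>{X \<in> Fx x. X - {x} \<subseteq> \<Lambda>}.
              1 + (W X - 1) *
                (\<Prod>x'\<in>X - {x}.
                   eff (WX W r x X) z x' (\<Lambda> - {x'}) (below (ord X) (X - {x}) x') /
                   (1 + eff (WX W r x X) z x' (\<Lambda> - {x'}) (below (ord X) (X - {x}) x'))))"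
proof -
  note fL = assms(1) and xL = assms(2) and lin = assms(3)
  define G where "G = {X \<in> Fx x. X - {x} \<subseteq> \<Lambda> \<and> X \<noteq> {x}}"
  define fac where "fac X = 1 + (W X - 1) *
                (\<Prod>x'\<in>X - {x}.
                   eff (WX W r x X) z x' (\<Lambda> - {x'}) (below (ord X) (X - {x}) x') /
                   (1 + eff (WX W r x X) z x' (\<Lambda> - {x'}) (below (ord X) (X - {x}) x')))" for X
  define Zs where "Zs S = (\<Sum>Y\<in>Pow \<Lambda>. prod z Y * boltz W Y {} * prod W {X \<in> S. X - {x} \<subseteq> Y})" for S
  have GF: "G \<subseteq> Fx x" by (auto simp: G_def)
  have finG: "finite G"
  proof (rule finite_subset)
    show "G \<subseteq> insert x ` Pow \<Lambda>"
    proof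
      fix X assume "X \<in> G"
      then have "X = insert x (X - {x})" "X - {x} \<in> Pow \<Lambda>" by (auto simp: G_def Fx_def)
      then show "X \<in> insert x ` Pow \<Lambda>" by blast
    qed
    show "finite (insert x ` Pow \<Lambda>)" using fL by simp
  qed
  have F1: "Zs {} = pf W z \<Lambda> {}" by (simp add: Zs_def pf_def pfX_def)
  have F2: "pfX W z {x} \<Lambda> {} = z x * W {x} * Zs G"
  proof -
    have "pfX W z {x} \<Lambda> {} = (\<Sum>Y\<in>Pow \<Lambda>. prod z (insert x Y) * boltz W (insert x Y) {})"
      using xL by (simp add: pfX_def)
    also have "\<dots> = (\<Sum>Y\<in>Pow \<Lambda>. z x * W {x} * (prod z Y * boltz W Y {} * prod W {X \<in> G. X - {x} \<subseteq> Y}))"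
    proof (rule sum.cong[OF refl])
      fix Y assume Y: "Y \<in> Pow \<Lambda>"
      have fY: "finite Y" using Y fL by (auto intro: finite_subset)
      have xY: "x \<notin> Y" using Y xL by auto
      show "prod z (insert x Y) * boltz W (insert x Y) {} =
          z x * W {x} * (prod z Y * boltz W Y {} * prod W {X \<in> G. X - {x} \<subseteq> Y})"
        using boltz_ins[OF fL xL, of Y W] Y fY xY by (simp add: G_def mult_ac)
    qed
    also have "\<dots> = z x * W {x} * Zs G" by (simp add: Zs_def sum_distrib_left)
    finally show ?thesis .
  qed
  have F3: "pf (WX W r x M) z \<Lambda> {} = Zs {X \<in> G. (X, M) \<in> r \<and> X \<noteq> M}" for M
    unfolding pf_def pfX_def Zs_def
    by (rule sum.cong) (use boltz_WX[OF fL xL] in \<open>auto simp: G_def mult_ac\<close>)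
  have F3': "pfX (WX W r x M) z (M - {x}) \<Lambda> {} =
     (\<Sum>Y\<in>{Y \<in> Pow \<Lambda>. M - {x} \<subseteq> Y}. prod z Y * boltz W Y {} *
         prod W {X \<in> {X \<in> G. (X, M) \<in> r \<and> X \<noteq> M}. X - {x} \<subseteq> Y})"
    if "M \<in> G" for M
  proof -
    have Msub: "M - {x} \<subseteq> \<Lambda>" using that by (auto simp: G_def)
    have "pfX (WX W r x M) z (M - {x}) \<Lambda> {} =
        (\<Sum>Y\<in>{Y \<in> Pow \<Lambda>. M - {x} \<subseteq> Y}. prod z Y * boltz (WX W r x M) Y {})"
      unfolding pfX_def by (rule sum_sup[OF fL Msub])
    also have "\<dots> = (\<Sum>Y\<in>{Y \<in> Pow \<Lambda>. M - {x} \<subseteq> Y}. prod z Y * boltz W Y {} *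
         prod W {X \<in> {X \<in> G. (X, M) \<in> r \<and> X \<noteq> M}. X - {x} \<subseteq> Y})"
      by (rule sum.cong[OF refl]) (use boltz_WX[OF fL xL] in \<open>auto simp: G_def mult_ac\<close>)
    finally show ?thesis .
  qed
  have tele: "Zs S = Zs {} * (\<Prod>X\<in>S. fac X)"
    if nz: "z x * W {x} \<noteq> 0" and SG: "S \<subseteq> G" and Sc: "\<forall>C\<in>S. \<forall>B\<in>G. (B, C) \<in> r \<longrightarrow> B \<in> S" for S
  proof -
    have hyp: "\<forall>X\<in>E. \<forall>x'\<in>X - {x}.
              pf (WX W r x X) z (\<Lambda> - {x'}) (below (ord X) (X - {x}) x') \<noteq> 0 \<and>
              eff (WX W r x X) z x' (\<Lambda> - {x'}) (below (ord X) (X - {x}) x') \<noteq> -1"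
      using assms(8) nz by blast
    have antis: "antisym r" using lin by (auto simp: linear_order_on_def partial_order_on_def)
    have fS: "finite S" using finG SG by (rule finite_subset[rotated])
    from fS SG Sc show ?thesis
    proof (induction S rule: finite_psubset_induct)
      case (psubset S)
      show ?case
      proof (cases "S = {}")
        case True
        then show ?thesis by simp
      next
        case False
        obtain M where M: "M \<in> S" "\<forall>b\<in>S. (b, M) \<in> r"
          using lin_max[OF psubset.hyps(1) False _ lin] psubset.prems(1) GF by blast
        define S' where "S' = S - {M}"
        have MG: "M \<in> G" using M psubset.prems by auto
        have S'eq: "S' = {X \<in> G. (X, M) \<in> r \<and> X \<noteq> M}"
          using M psubset.prems unfolding S'_def by blast
        have S'S: "S' \<subset> S" using M S'_def by auto
        have S'c: "\<forall>C\<in>S'. \<forall>B\<in>G. (B, C) \<in> r \<longrightarrow> B \<in> S'"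
        proof (intro ballI impI)
          fix C B assume c: "C \<in> S'" and b: "B \<in> G" and bc: "(B, C) \<in> r"
          have "B \<in> S" using psubset.prems c b bc S'_def by auto
          moreover have "B \<noteq> M"
          proof
            assume "B = M"
            then have "(M, C) \<in> r" "(C, M) \<in> r" using bc M c S'_def by auto
            then have "C = M" using antis by (auto dest: antisymD)
            then show False using c S'_def by auto
          qed
          ultimately show "B \<in> S'" using S'_def by auto
        qed
        have IH: "Zs S' = Zs {} * (\<Prod>X\<in>S'. fac X)"
          using psubset.IH[OF S'S _ S'c] S'S psubset.prems(1) by blast
        let ?t = "\<lambda>Y. prod z Y * boltz W Y {} * prod W {X \<in> S'. X - {x} \<subseteq> Y}"
        have split1: "Zs S = Zs S' + (W M - 1) * (\<Sum>Y\<in>{Y \<in> Pow \<Lambda>. M - {x} \<subseteq> Y}. ?t Y)"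
        proof -
          have "Zs S = (\<Sum>Y\<in>Pow \<Lambda>. ?t Y + (if M - {x} \<subseteq> Y then (W M - 1) * ?t Y else 0))"
            unfolding Zs_def
          proof (rule sum.cong[OF refl])
            fix Y assume Y: "Y \<in> Pow \<Lambda>"
            have fin': "finite {X \<in> S'. X - {x} \<subseteq> Y}" using psubset.hyps S'_def by auto
            show "prod z Y * boltz W Y {} * prod W {X \<in> S. X - {x} \<subseteq> Y} =
                ?t Y + (if M - {x} \<subseteq> Y then (W M - 1) * ?t Y else 0)"
            proof (cases "M - {x} \<subseteq> Y")
              case True
              then have "{X \<in> S. X - {x} \<subseteq> Y} = insert M {X \<in> S'. X - {x} \<subseteq> Y}"
                using M S'_def by auto
              moreover have "M \<notin> {X \<in> S'. X - {x} \<subseteq> Y}" using S'_def by auto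
              ultimately have "prod W {X \<in> S. X - {x} \<subseteq> Y} = W M * prod W {X \<in> S'. X - {x} \<subseteq> Y}"
                using fin' by simp
              then show ?thesis using True by (simp add: algebra_simps)
            next
              case False
              then have "{X \<in> S. X - {x} \<subseteq> Y} = {X \<in> S'. X - {x} \<subseteq> Y}"
                using M S'_def by auto
              then show ?thesis using False by simp
            qed
          qed
          also have "\<dots> = Zs S' + (\<Sum>Y\<in>Pow \<Lambda>. if M - {x} \<subseteq> Y then (W M - 1) * ?t Y else 0)"
            by (simp add: sum.distrib Zs_def)
          also have "(\<Sum>Y\<in>Pow \<Lambda>. if M - {x} \<subseteq> Y then (W M - 1) * ?t Y else 0) =
             (\<Sum>Y\<in>{Y \<in> Pow \<Lambda>. M - {x} \<subseteq> Y}. (W M - 1) * ?t Y)"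
            by (rule sum.inter_filter[symmetric]) (use fL in simp)
          finally show ?thesis by (simp add: sum_distrib_left)
        qed
        have Q: "(\<Sum>Y\<in>{Y \<in> Pow \<Lambda>. M - {x} \<subseteq> Y}. ?t Y) = pfX (WX W r x M) z (M - {x}) \<Lambda> {}"
          using F3'[OF MG] S'eq by simp
        have prS: "(\<Prod>X\<in>S. fac X) = fac M * (\<Prod>X\<in>S'. fac X)"
          using psubset.hyps M S'_def by (simp add: prod.remove)
        show ?thesis
        proof (cases "W M = 1")
          case True
          then have "fac M = 1" by (simp add: fac_def)
          then show ?thesis using split1 True IH prS by simp
        next
          case False
          have ME: "M \<in> E" using assms(5) MG False by (auto simp: G_def)
          have MF: "M \<in> Fx x" using MG GF by auto
          have Msub: "M - {x} \<subseteq> \<Lambda>" using MG by (auto simp: G_def)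
          have cp: "pfX (WX W r x M) z (M - {x}) \<Lambda> {} = pf (WX W r x M) z \<Lambda> {} *
            (\<Prod>x'\<in>M - {x}.
                   eff (WX W r x M) z x' (\<Lambda> - {x'}) (below (ord M) (M - {x}) x') /
                   (1 + eff (WX W r x M) z x' (\<Lambda> - {x'}) (below (ord M) (M - {x}) x')))"
            by (rule corr_prod[OF fL Msub]) (use assms(6) MF hyp ME in auto)
          have "Zs S = Zs S' * fac M"
            using split1 Q cp F3[of M] S'eq by (simp add: fac_def algebra_simps)
          then show ?thesis using IH prS by (simp add: mult_ac)
        qed
      qed
    qed
  qed
  have setq: "{X \<in> Fx x. X - {x} \<subseteq> \<Lambda>} = insert {x} G" by (auto simp: G_def Fx_def)
  have xG: "{x} \<notin> G" by (simp add: G_def)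
  have fx: "fac {x} = W {x}" by (simp add: fac_def)
  have RHS: "(\<Prod>X\<in>{X \<in> Fx x. X - {x} \<subseteq> \<Lambda>}. fac X) = W {x} * (\<Prod>X\<in>G. fac X)"
    unfolding setq using finG xG fx by simp
  have LHS: "eff W z x \<Lambda> {} = z x * W {x} * Zs G / Zs {}"
    using F1 F2 by (simp add: eff_def corr_def)
  show ?thesis
  proof (cases "z x * W {x} = 0")
    case True
    then show ?thesis using LHS RHS unfolding fac_def by auto
  next
    case False
    have "Zs G = Zs {} * (\<Prod>X\<in>G. fac X)" by (rule tele[OF False order_refl]) blast
    then have "eff W z x \<Lambda> {} = z x * (W {x} * (\<Prod>X\<in>G. fac X))"
      using LHS F1 assms(7) by simp
    then show ?thesis using RHS unfolding fac_def by simp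
  qed
qed

end
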